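(* Let $\mathcal{G}^{\mathbb{c}}=(\mathbb{C},\mathbb{E}^{\mathbb{c}})$ be a C-DMG and let $\mathbb{C}_\mathbb{X},\mathbb{C}_\mathbb{Y},\mathbb{C}_\mathbb{W}$ be pairwise disjoint subsets of $\mathbb{C}$; for a compatible ADMG write $\mathbb{X}=\bigcup_{C\in\mathbb{C}_\mathbb{X}}C$, $\mathbb{Y}=\bigcup_{C\in\mathbb{C}_\mathbb{Y}}C$, $\mathbb{W}=\bigcup_{C\in\mathbb{C}_\mathbb{W}}C$. Assume that either (i) the sizes of the clusters are unknown (so compatible ADMGs may have clusters of any nonempty sizes), or (ii) every cluster contains more than one variable. If $\mathbb{C}_\mathbb{X}$ and $\mathbb{C}_\mathbb{Y}$ are not d-separated by $\mathbb{C}_\mathbb{W}$ in $\mathcal{G}^{\mathbb{c}}$, then there exists an ADMG $\mathcal{G}=(\mathbb{V},\mathbb{E})$ compatible with $\mathcal{G}^{\mathbb{c}}$ (with clusters as in (i) or (ii)) in which $\mathbb{X}$ and $\mathbb{Y}$ are not d-separated by $\mathbb{W}$.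
   Context: An ADMG $\mathcal{G}=(\mathbb{V},\mathbb{E})$ is a graph on a finite vertex set $\mathbb{V}$ whose edges are directed edges $X\rightarrow Y$ and bidirected edges $X\leftrightarrow Y$, such that the directed edges form no directed cycle. A C-DMG $\mathcal{G}^{\mathbb{c}}=(\mathbb{C},\mathbb{E}^{\mathbb{c}})$ compatible with an ADMG $\mathcal{G}=(\mathbb{V},\mathbb{E})$ is the graph whose vertex set $\mathbb{C}=\{C_1,\dots,C_k\}$ is a partition of $\mathbb{V}$ (each vertex $C_i$ is a cluster of variables) and in which, for all $C_i,C_j\in\mathbb{C}$ (possibly $i=j$), $C_i\rightarrow C_j$ (resp. $C_i\leftrightarrow C_j$) is an edge iff there exist $X\in C_i$, $Y\in C_j$ with $X\rightarrow Y$ (resp. $X\leftrightarrow Y$) in $\mathbb{E}$; an ADMG is compatible with a C-DMG if the C-DMG arises from it in this way. A C-DMG may contain directed cycles and self-loops. In a graph $\mathcal{G}^*$ (ADMG or C-DMG), $\mathrm{De}(V)$ denotes the descendants of $V$ (including $V$ itself). A walk $\langle V_1,\dots,V_n\rangle$ is blocked by a set $\mathbb{W}^*$ if (1) $V_1\in\mathbb{W}^*$ or $V_n\in\mathbb{W}^*$; or (2) for some $1<i<n$, the walk contains $V_{i-1}\,*\!-\!*\,V_i\rightarrow V_{i+1}$ or $V_{i-1}\leftarrow V_i\,*\!-\!*\,V_{i+1}$ (any edge type for $*\!-\!*$) and $V_i\in\mathbb{W}^*$; or (3) for some $1<i<n$, the walk contains $V_{i-1}\,*\!\!\rightarrow V_i\leftarrow\!\!*\,V_{i+1}$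 (each edge directed into $V_i$ or bidirected) and $\mathrm{De}(V_i)\cap\mathbb{W}^*=\emptyset$. A walk that is not blocked is active. A path is a walk with no repeated vertex. $\mathbb{W}^*$ d-separates disjoint sets $\mathbb{X}^*$ and $\mathbb{Y}^*$ if it blocks every path from a vertex of $\mathbb{X}^*$ to a vertex of $\mathbb{Y}^*$. *)

theory Defs
  imports Main
begin

text \<open>Mixed graphs (ADMGs and C-DMGs) are given by a vertex set S, a set of directed
edges D (a pair (x,y) means x \<rightarrow> y) and a set of bidirected edges B (symmetric).\<close>

text \<open>Edge marks used along a walk: Fwd at position i means vs!i \<rightarrow> vs!(i+1),
Bwd means vs!i \<leftarrow> vs!(i+1), Bid means vs!i \<leftrightarrow> vs!(i+1).\<close>
datatype emark = Fwd | Bwd | Bid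

definition is_walk :: "'a set \<Rightarrow> ('a \<times> 'a) set \<Rightarrow> ('a \<times> 'a) set \<Rightarrow> 'a list \<Rightarrow> emark list \<Rightarrow> bool" where
  "is_walk S D B vs es \<longleftrightarrow> vs \<noteq> [] \<and> set vs \<subseteq> S \<and> length es = length vs - 1 \<and>
     (\<forall>i < length es.
        (es!i = Fwd \<longrightarrow> (vs!i, vs!Suc i) \<in> D) \<and>
        (es!i = Bwd \<longrightarrow> (vs!Suc i, vs!i) \<in> D) \<and>
        (es!i = Bid \<longrightarrow> (vs!i, vs!Suc i) \<in> B))"

definition is_path :: "'a set \<Rightarrow> ('a \<times> 'a) set \<Rightarrow> ('a \<times> 'a) set \<Rightarrow> 'a list \<Rightarrow> emark list \<Rightarrow> bool" where
  "is_path S D B vs es \<longleftrightarrow> is_walk S D B vs es \<and> distinct vs"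

definition De :: "('a \<times> 'a) set \<Rightarrow> 'a \<Rightarrow> 'a set" where
  "De D v = {u. (v, u) \<in> D\<^sup>*}"

definition blocked :: "('a \<times> 'a) set \<Rightarrow> 'a set \<Rightarrow> 'a list \<Rightarrow> emark list \<Rightarrow> bool" where
  "blocked D W vs es \<longleftrightarrow>
     hd vs \<in> W \<or> last vs \<in> W \<or>
     (\<exists>i. 0 < i \<and> i < length vs - 1 \<and>
        (es!i = Fwd \<or> es!(i-1) = Bwd) \<and> vs!i \<in> W) \<or>
     (\<exists>i. 0 < i \<and> i < length vs - 1 \<and>
        es!(i-1) \<in> {Fwd, Bid} \<and> es!i \<in> {Bwd, Bid} \<and> De D (vs!i) \<inter> W = {})"

definition d_separated :: "'a set \<Rightarrow> ('a \<times> 'a) set \<Rightarrow> ('a \<times> 'a) set \<Rightarrow> 'a set \<Rightarrow> 'a set \<Rightarrow> 'a set \<Rightarrow> bool" where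
  "d_separated S D B X Y W \<longleftrightarrow>
     (\<forall>vs es. is_path S D B vs es \<and> hd vs \<in> X \<and> last vs \<in> Y \<longrightarrow> blocked D W vs es)"

definition is_ADMG :: "'v set \<Rightarrow> ('v \<times> 'v) set \<Rightarrow> ('v \<times> 'v) set \<Rightarrow> bool" where
  "is_ADMG V D B \<longleftrightarrow> finite V \<and> D \<subseteq> V \<times> V \<and> B \<subseteq> V \<times> V \<and> sym B \<and>
     (\<forall>x. (x, x) \<notin> B) \<and> acyclic D"

text \<open>An ADMG (V,D,B) is compatible with the cluster graph (C,Dc,Bc) via the cluster map f:
the clusters are the nonempty fibres f^{-1}(c) \<inter> V, c \<in> C (a partition of V), and the
cluster edges are exactly the images of the ADMG edges.\<close>
definition compatible :: "'v set \<Rightarrow> ('v \<times> 'v) set \<Rightarrow> ('v \<times> 'v) set \<Rightarrow> ('v \<Rightarrow> 'c) \<Rightarrow>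
     'c set \<Rightarrow> ('c \<times> 'c) set \<Rightarrow> ('c \<times> 'c) set \<Rightarrow> bool" where
  "compatible V D B f C Dc Bc \<longleftrightarrow> is_ADMG V D B \<and> f ` V = C \<and>
     Dc = {(f x, f y) | x y. (x, y) \<in> D} \<and> Bc = {(f x, f y) | x y. (x, y) \<in> B}"

definition cl_union :: "('v \<Rightarrow> 'c) \<Rightarrow> 'v set \<Rightarrow> 'c set \<Rightarrow> 'v set" where
  "cl_union f V CS = {v \<in> V. f v \<in> CS}"

end

theory Submission
  imports Defs
begin

lemma main_lemma:
  fixes C :: "'c set" and V :: "'v set" and f :: "'v \<Rightarrow> 'c"
  assumes finV: "finite V" and fV: "f ` V = C"
    and DcC: "Dc \<subseteq> C \<times> C" and BcC: "Bc \<subseteq> C \<times> C" and symBc: "sym Bc"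
    and al: "\<And>c. c \<in> C \<Longrightarrow> \<alpha> c \<in> V \<and> f (\<alpha> c) = c"
    and be: "\<And>c. c \<in> C \<Longrightarrow> \<beta> c \<in> V \<and> f (\<beta> c) = c"
    and ab: "\<And>c. c \<in> C \<Longrightarrow> \<alpha> c \<noteq> \<beta> c"
    and dXW: "CX \<inter> CW = {}" and dYW: "CY \<inter> CW = {}" and CWC: "CW \<subseteq> C"
    and notsep: "\<not> d_separated C Dc Bc CX CY CW"
  shows "\<exists>D' B'. compatible V D' B' f C Dc Bc \<and>
     \<not> d_separated V D' B' (cl_union f V CX) (cl_union f V CY) (cl_union f V CW)"
proof -
  from notsep obtain vs es where path: "is_path C Dc Bc vs es" and hd: "hd vs \<in> CX"
    and lst: "last vs \<in> CY" and nb: "\<not> blocked Dc CW vs es"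
    unfolding d_separated_def by blast
  have finC: "finite C" using finV fV by blast
  define n where "n = length vs"
  have vsne: "vs \<noteq> []" and vsC: "set vs \<subseteq> C" and les: "length es = n - 1"
    and edges: "\<And>i. i < length es \<Longrightarrow>
        (es!i = Fwd \<longrightarrow> (vs!i, vs!Suc i) \<in> Dc) \<and>
        (es!i = Bwd \<longrightarrow> (vs!Suc i, vs!i) \<in> Dc) \<and>
        (es!i = Bid \<longrightarrow> (vs!i, vs!Suc i) \<in> Bc)"
    and dvs: "distinct vs"
    using path unfolding is_path_def is_walk_def n_def by auto
  have vsiC: "vs!i \<in> C" if "i < n" for i using vsC that n_def by auto
  define dist where "dist c = (LEAST k. \<exists>w\<in>CW. (c,w) \<in> Dc ^^ k)" for c
  define Mx where "Mx = Max (dist ` C)"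
  define stp where "stp e = (case e of Fwd \<Rightarrow> (1::int) | Bwd \<Rightarrow> -1 | Bid \<Rightarrow> 0)" for e
  define g where "g i = (\<Sum>j<i. stp (es!j))" for i
  define K where "K = int Mx + int n + 1"
  define idx where "idx c = inv_into {..<n} (nth vs) c" for c
  define ra where "ra c = - int (dist c)" for c
  define rb where "rb c = - K + (if c \<in> set vs then g (idx c) else 0)" for c
  define r where "r x = (if x = \<alpha> (f x) then ra (f x) else rb (f x))" for x
  define D' where "D' = {(x,y). x \<in> V \<and> y \<in> V \<and> (f x, f y) \<in> Dc \<and> r x < r y}"
  define B' where "B' = {(x,y). x \<in> V \<and> y \<in> V \<and> x \<noteq> y \<and> (f x, f y) \<in> Bc}"
  define W where "W = cl_union f V CW"
  define col where "col i \<longleftrightarrow> 0 < i \<and> i < n - 1 \<and> es!(i-1) \<in> {Fwd,Bid} \<and> es!i \<in> {Bwd,Bid}" for i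
  define vs' where "vs' = map (\<lambda>i. if col i then \<alpha> (vs!i) else \<beta> (vs!i)) [0..<n]"
  have gS: "g (Suc i) = g i + stp (es!i)" for i by (simp add: g_def)
  have gb: "\<bar>g i\<bar> \<le> int i" for i
  proof (induction i)
    case 0 then show ?case by (simp add: g_def)
  next
    case (Suc i)
    have "\<bar>stp (es!i)\<bar> \<le> 1" by (cases "es!i") (auto simp: stp_def)
    then show ?case using Suc gS[of i] by linarith
  qed
  have idx_nth: "idx (vs!i) = i" if "i < n" for i
  proof -
    have "inj_on (nth vs) {..<n}" using dvs unfolding n_def
      by (simp add: inj_on_def nth_eq_iff_index_eq)
    then show ?thesis unfolding idx_def using that by (simp add: inv_into_f_f)
  qed
  have rb_nth: "rb (vs!i) = - K + g i" if "i < n" for i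
    using that idx_nth[OF that] by (simp add: rb_def n_def)
  have rb_le: "rb c \<le> - K + int n" for c
  proof (cases "c \<in> set vs")
    case True
    then obtain i where "i < n" "c = vs!i" by (auto simp: in_set_conv_nth n_def)
    then show ?thesis using rb_nth gb[of i] by simp
  next
    case False then show ?thesis by (simp add: rb_def)
  qed
  have ra_ge: "ra c \<ge> - int Mx" if "c \<in> C" for c
    using that finC unfolding ra_def Mx_def by simp
  have rab: "rb c < ra d" if "d \<in> C" for c d
    using rb_le[of c] ra_ge[OF that] unfolding K_def by simp
  have r_al: "r (\<alpha> c) = ra c" if "c \<in> C" for c using al[OF that] by (simp add: r_def)
  have r_be: "r (\<beta> c) = rb c" if "c \<in> C" for c using be[OF that] ab[OF that] by (simp add: r_def)
  have acyc: "acyclic D'"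
  proof -
    have "r x < r y" if "(x,y) \<in> D'\<^sup>+" for x y
      using that by (induction rule: trancl_induct) (auto simp: D'_def)
    then show ?thesis unfolding acyclic_def by blast
  qed
  have compat: "compatible V D' B' f C Dc Bc"
    unfolding compatible_def is_ADMG_def
  proof (intro conjI)
    show "finite V" by fact
    show "D' \<subseteq> V \<times> V" by (auto simp: D'_def)
    show "B' \<subseteq> V \<times> V" by (auto simp: B'_def)
    show "sym B'" using symBc by (auto simp: B'_def sym_def)
    show "\<forall>x. (x, x) \<notin> B'" by (auto simp: B'_def)
    show "acyclic D'" by fact
    show "f ` V = C" by fact
    show "Dc = {(f x, f y) |x y. (x, y) \<in> D'}"
    proof
      show "Dc \<subseteq> {(f x, f y) |x y. (x, y) \<in> D'}"
      proof
        fix p assume p: "p \<in> Dc"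
        then obtain c d where cd: "p = (c,d)" "c \<in> C" "d \<in> C" using DcC by auto
        have "(\<beta> c, \<alpha> d) \<in> D'" using cd p al be r_al r_be rab unfolding D'_def by auto
        moreover have "p = (f (\<beta> c), f (\<alpha> d))" using cd al be by simp
        ultimately show "p \<in> {(f x, f y) |x y. (x, y) \<in> D'}" by blast
      qed
    qed (auto simp: D'_def)
    show "Bc = {(f x, f y) |x y. (x, y) \<in> B'}"
    proof
      show "Bc \<subseteq> {(f x, f y) |x y. (x, y) \<in> B'}"
      proof
        fix p assume p: "p \<in> Bc"
        then obtain c d where cd: "p = (c,d)" "c \<in> C" "d \<in> C" using BcC by auto
        show "p \<in> {(f x, f y) |x y. (x, y) \<in> B'}"
        proof (cases "c = d")
          case True
          then have "(\<alpha> c, \<beta> d) \<in> B'" using cd p al be ab unfolding B'_def by auto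
          moreover have "p = (f (\<alpha> c), f (\<beta> d))" using cd al be True by simp
          ultimately show ?thesis by blast
        next
          case False
          have "\<alpha> c \<noteq> \<alpha> d" using al cd False by metis
          then have "(\<alpha> c, \<alpha> d) \<in> B'" using cd p al unfolding B'_def by auto
          moreover have "p = (f (\<alpha> c), f (\<alpha> d))" using cd al be by simp
          ultimately show ?thesis by blast
        qed
      qed
    qed (auto simp: B'_def)
  qed
  have chain: "\<And>c. dist c = k \<Longrightarrow> (\<exists>w\<in>CW. (c,w) \<in> Dc ^^ k) \<Longrightarrow> c \<in> C \<Longrightarrow> De D' (\<alpha> c) \<inter> W \<noteq> {}" for k
  proof (induction k)
    case (0 c)
    then have "c \<in> CW" by auto
    then have "\<alpha> c \<in> W" using al[OF \<open>c \<in> C\<close>] by (simp add: W_def cl_union_def)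
    then show ?case by (auto simp: De_def)
  next
    case (Suc k c)
    then obtain w where w: "w \<in> CW" "(c,w) \<in> Dc ^^ Suc k" by blast
    then obtain d where d: "(c,d) \<in> Dc" "(d,w) \<in> Dc ^^ k" by (meson relpow_Suc_D2)
    have dC: "d \<in> C" using d DcC by auto
    have le: "dist d \<le> k" unfolding dist_def by (rule Least_le) (use d w in blast)
    have "dist d = k"
    proof (rule ccontr)
      assume "dist d \<noteq> k"
      then have lt: "dist d < k" using le by simp
      have "\<exists>w\<in>CW. (d,w) \<in> Dc ^^ dist d" unfolding dist_def
        by (rule LeastI[of _ k]) (use d w in blast)
      then obtain w' where "w' \<in> CW" "(d,w') \<in> Dc ^^ dist d" by blast
      then have cw': "(c,w') \<in> Dc ^^ Suc (dist d)" using d(1) by (meson relpow_Suc_I2)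
      have "dist c \<le> Suc (dist d)" unfolding dist_def by (rule Least_le) (use cw'[unfolded dist_def] \<open>w' \<in> CW\<close> in blast)
      then show False using lt Suc.prems(1) by simp
    qed
    then have IH: "De D' (\<alpha> d) \<inter> W \<noteq> {}" using Suc.IH[of d] d w dC by blast
    have "(\<alpha> c, \<alpha> d) \<in> D'" unfolding D'_def
      using al[OF Suc.prems(3)] al[OF dC] d(1) r_al[OF Suc.prems(3)] r_al[OF dC] Suc.prems(1) \<open>dist d = k\<close>
      by (simp add: ra_def)
    then show ?case using IH by (auto simp: De_def intro: converse_rtrancl_into_rtrancl)
  qed
  have lvs': "length vs' = n" by (simp add: vs'_def)
  have nvs': "vs'!i = (if col i then \<alpha> (vs!i) else \<beta> (vs!i))" if "i < n" for i
    using that by (simp add: vs'_def)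
  have fvs': "f (vs'!i) = vs!i \<and> vs'!i \<in> V" if "i < n" for i
    using nvs'[OF that] al[OF vsiC[OF that]] be[OF vsiC[OF that]] by simp
  have mapf: "map f vs' = vs"
    by (rule nth_equalityI) (auto simp: lvs' n_def fvs')
  have rvs': "r (vs'!i) = (if col i then ra (vs!i) else - K + g i)" if "i < n" for i
    using nvs'[OF that] r_al[OF vsiC[OF that]] r_be[OF vsiC[OF that]] rb_nth[OF that] by simp
  have inW: "vs'!i \<in> W \<longleftrightarrow> vs!i \<in> CW" if "i < n" for i
    using fvs'[OF that] by (auto simp: W_def cl_union_def)
  have npos: "0 < n" using vsne n_def by simp
  have walk: "is_path V D' B' vs' es"
    unfolding is_path_def is_walk_def
  proof (intro conjI allI impI)
    show "vs' \<noteq> []" using lvs' npos by auto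
    show "set vs' \<subseteq> V" using fvs' lvs' by (auto simp: in_set_conv_nth)
    show "length es = length vs' - 1" using les lvs' by simp
    show "distinct vs'" using dvs mapf by (metis distinct_map)
  next
    fix i assume i: "i < length es" and e: "es!i = Fwd"
    then have i1: "i < n" "Suc i < n" using les by auto
    have "\<not> col i" using e by (simp add: col_def)
    have "r (vs'!i) < r (vs'!Suc i)"
    proof (cases "col (Suc i)")
      case True
      then show ?thesis using \<open>\<not> col i\<close> rvs'[OF i1(1)] rvs'[OF i1(2)] rab[OF vsiC[OF i1(2)], of "vs!i"] rb_nth[OF i1(1)]
        by simp
    next
      case False
      then show ?thesis using \<open>\<not> col i\<close> rvs'[OF i1(1)] rvs'[OF i1(2)] gS[of i] e
        by (simp add: stp_def)
    qed
    then show "(vs'!i, vs'!Suc i) \<in> D'" using edges[OF i] e fvs'[OF i1(1)] fvs'[OF i1(2)]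
      by (simp add: D'_def)
  next
    fix i assume i: "i < length es" and e: "es!i = Bwd"
    then have i1: "i < n" "Suc i < n" using les by auto
    have "\<not> col (Suc i)" using e by (simp add: col_def)
    have "r (vs'!Suc i) < r (vs'!i)"
    proof (cases "col i")
      case True
      then show ?thesis using \<open>\<not> col (Suc i)\<close> rvs'[OF i1(1)] rvs'[OF i1(2)] rab[OF vsiC[OF i1(1)], of "vs!Suc i"] rb_nth[OF i1(2)]
        by simp
    next
      case False
      then show ?thesis using \<open>\<not> col (Suc i)\<close> rvs'[OF i1(1)] rvs'[OF i1(2)] gS[of i] e
        by (simp add: stp_def)
    qed
    then show "(vs'!Suc i, vs'!i) \<in> D'" using edges[OF i] e fvs'[OF i1(1)] fvs'[OF i1(2)]
      by (simp add: D'_def)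
  next
    fix i assume i: "i < length es" and e: "es!i = Bid"
    then have i1: "i < n" "Suc i < n" using les by auto
    have "vs!i \<noteq> vs!Suc i" using dvs i1 by (simp add: n_def nth_eq_iff_index_eq)
    then have "vs'!i \<noteq> vs'!Suc i" using fvs'[OF i1(1)] fvs'[OF i1(2)] by metis
    then show "(vs'!i, vs'!Suc i) \<in> B'" using edges[OF i] e fvs'[OF i1(1)] fvs'[OF i1(2)]
      by (simp add: B'_def)
  qed
  have vs'ne: "vs' \<noteq> []" using lvs' npos by auto
  have hd': "hd vs' \<in> cl_union f V CX"
  proof -
    have "hd vs' = vs'!0" using vs'ne by (simp add: hd_conv_nth)
    moreover have "hd vs = vs!0" using vsne by (simp add: hd_conv_nth)
    ultimately show ?thesis using hd fvs'[OF npos] unfolding cl_union_def by simp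
  qed
  have lst': "last vs' \<in> cl_union f V CY"
  proof -
    have n1: "n - 1 < n" using npos by simp
    have "last vs' = vs'!(n-1)" using vs'ne lvs' by (simp add: last_conv_nth)
    moreover have "last vs = vs!(n-1)" using vsne by (simp add: last_conv_nth n_def)
    ultimately show ?thesis using lst fvs'[OF n1] unfolding cl_union_def by simp
  qed
  have nb': "\<not> blocked D' W vs' es"
  proof
    assume "blocked D' W vs' es"
    then consider (h) "hd vs' \<in> W" | (l) "last vs' \<in> W"
      | (nc) i where "0 < i" "i < length vs' - 1" "es!i = Fwd \<or> es!(i-1) = Bwd" "vs'!i \<in> W"
      | (c) i where "0 < i" "i < length vs' - 1" "es!(i-1) \<in> {Fwd, Bid}" "es!i \<in> {Bwd, Bid}"
          "De D' (vs'!i) \<inter> W = {}"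
      unfolding blocked_def by blast
    then show False
    proof cases
      case h
      have "f (hd vs') \<in> CW" using h unfolding W_def cl_union_def by simp
      moreover have "f (hd vs') \<in> CX" using hd' unfolding cl_union_def by simp
      ultimately show ?thesis using dXW by blast
    next
      case l
      have "f (last vs') \<in> CW" using l unfolding W_def cl_union_def by simp
      moreover have "f (last vs') \<in> CY" using lst' unfolding cl_union_def by simp
      ultimately show ?thesis using dYW by blast
    next
      case (nc i)
      then have "i < n" using lvs' by simp
      then have "vs!i \<in> CW" using inW nc by blast
      moreover have "i < length vs - 1" using nc(2) lvs' n_def by simp
      ultimately have "blocked Dc CW vs es" unfolding blocked_def using nc(1,3) by blast
      then show ?thesis using nb by blast
    next
      case (c i)
      then have i: "i < n" using lvs' by simp
      have i2: "i < length vs - 1" using c(2) lvs' n_def by simp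
      have "De Dc (vs!i) \<inter> CW \<noteq> {}"
      proof
        assume "De Dc (vs!i) \<inter> CW = {}"
        then have "blocked Dc CW vs es" unfolding blocked_def using c(1,3,4) i2 by blast
        then show False using nb by blast
      qed
      then obtain w where w: "w \<in> CW" "(vs!i, w) \<in> Dc\<^sup>*" by (auto simp: De_def)
      then obtain k where "(vs!i, w) \<in> Dc ^^ k" using rtrancl_power by blast
      then have ex: "\<exists>k. \<exists>w\<in>CW. (vs!i, w) \<in> Dc ^^ k" using w by blast
      have "\<exists>w\<in>CW. (vs!i, w) \<in> Dc ^^ dist (vs!i)" unfolding dist_def
        using ex by (rule LeastI_ex)
      then have "De D' (\<alpha> (vs!i)) \<inter> W \<noteq> {}" using chain vsiC[OF i] by blast
      moreover have "col i" using c lvs' by (simp add: col_def)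
      ultimately show ?thesis using c nvs'[OF i] by simp
    qed
  qed
  have notsep': "\<not> d_separated V D' B' (cl_union f V CX) (cl_union f V CY) W"
    unfolding d_separated_def using walk hd' lst' nb' by blast
  show ?thesis using compat notsep' W_def by blast
qed

theorem theorem2:
  fixes C :: "'c set" and Dc Bc :: "('c \<times> 'c) set" and CX CY CW :: "'c set"
  assumes "CX \<subseteq> C" and "CY \<subseteq> C" and "CW \<subseteq> C"
    and "CX \<inter> CY = {}" and "CX \<inter> CW = {}" and "CY \<inter> CW = {}"
    and notsep: "\<not> d_separated C Dc Bc CX CY CW"
  shows "((\<exists>(V :: 'v set) f D B. compatible V D B f C Dc Bc) \<longrightarrow>
           (\<exists>(V :: ('c \<times> nat) set) f D B. compatible V D B f C Dc Bc \<and>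
              \<not> d_separated V D B (cl_union f V CX) (cl_union f V CY) (cl_union f V CW))) \<and>
         (\<forall>(V :: 'v set) f D B. compatible V D B f C Dc Bc \<and>
              (\<forall>c \<in> C. card {v \<in> V. f v = c} > 1) \<longrightarrow>
           (\<exists>D' B'. compatible V D' B' f C Dc Bc \<and>
              \<not> d_separated V D' B' (cl_union f V CX) (cl_union f V CY) (cl_union f V CW)))"
proof (intro conjI impI allI)
  assume "\<exists>(V :: 'v set) f D B. compatible V D B f C Dc Bc"
  then obtain V :: "'v set" and f D B where cp: "compatible V D B f C Dc Bc" by blast
  then have finV: "finite V" and fV: "f ` V = C" and DB: "D \<subseteq> V \<times> V" "B \<subseteq> V \<times> V" "sym B"
    and Dc: "Dc = {(f x, f y) | x y. (x, y) \<in> D}" and Bc: "Bc = {(f x, f y) | x y. (x, y) \<in> B}"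
    unfolding compatible_def is_ADMG_def by auto
  have finC: "finite C" using finV fV by blast
  have DcC: "Dc \<subseteq> C \<times> C" using DB fV Dc by auto
  have BcC: "Bc \<subseteq> C \<times> C" using DB fV Bc by auto
  have symBc: "sym Bc" using DB(3) Bc unfolding sym_def by blast
  define V0 :: "('c \<times> nat) set" where "V0 = C \<times> {0, 1}"
  have "\<exists>D' B'. compatible V0 D' B' fst C Dc Bc \<and>
     \<not> d_separated V0 D' B' (cl_union fst V0 CX) (cl_union fst V0 CY) (cl_union fst V0 CW)"
    by (rule main_lemma[where \<alpha> = "\<lambda>c. (c, 1)" and \<beta> = "\<lambda>c. (c, 0)"])
       (use finC DcC BcC symBc notsep assms in \<open>auto simp: V0_def\<close>)
  then show "\<exists>(V :: ('c \<times> nat) set) f D B. compatible V D B f C Dc Bc \<and>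
              \<not> d_separated V D B (cl_union f V CX) (cl_union f V CY) (cl_union f V CW)" by blast
next
  fix V :: "'v set" and f D B
  assume a: "compatible V D B f C Dc Bc \<and> (\<forall>c \<in> C. card {v \<in> V. f v = c} > 1)"
  then have finV: "finite V" and fV: "f ` V = C" and DB: "D \<subseteq> V \<times> V" "B \<subseteq> V \<times> V" "sym B"
    and Dc: "Dc = {(f x, f y) | x y. (x, y) \<in> D}" and Bc: "Bc = {(f x, f y) | x y. (x, y) \<in> B}"
    unfolding compatible_def is_ADMG_def by auto
  have DcC: "Dc \<subseteq> C \<times> C" using DB fV Dc by auto
  have BcC: "Bc \<subseteq> C \<times> C" using DB fV Bc by auto
  have symBc: "sym Bc" using DB(3) Bc unfolding sym_def by blast
  have two: "\<exists>p. fst p \<in> V \<and> snd p \<in> V \<and> f (fst p) = c \<and> f (snd p) = c \<and> fst p \<noteq> snd p"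
    if c: "c \<in> C" for c
  proof -
    let ?S = "{v \<in> V. f v = c}"
    have cs: "card ?S > 1" using a c by blast
    then have "?S \<noteq> {}" by (metis card.empty not_less_zero)
    then obtain x where x: "x \<in> ?S" by blast
    have "card (?S - {x}) > 0" using cs x finV by (simp add: card_Diff_singleton)
    then have "?S - {x} \<noteq> {}" by (metis card.empty less_irrefl)
    then obtain y where y: "y \<in> ?S - {x}" by blast
    show ?thesis using x y by (intro exI[of _ "(x,y)"]) auto
  qed
  define \<alpha> where "\<alpha> c = fst (SOME p. fst p \<in> V \<and> snd p \<in> V \<and> f (fst p) = c \<and> f (snd p) = c \<and> fst p \<noteq> snd p)" for c
  define \<beta> where "\<beta> c = snd (SOME p. fst p \<in> V \<and> snd p \<in> V \<and> f (fst p) = c \<and> f (snd p) = c \<and> fst p \<noteq> snd p)" for c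
  have ab: "\<alpha> c \<in> V \<and> \<beta> c \<in> V \<and> f (\<alpha> c) = c \<and> f (\<beta> c) = c \<and> \<alpha> c \<noteq> \<beta> c" if "c \<in> C" for c
    unfolding \<alpha>_def \<beta>_def using someI_ex[OF two[OF that]] by blast
  show "\<exists>D' B'. compatible V D' B' f C Dc Bc \<and>
              \<not> d_separated V D' B' (cl_union f V CX) (cl_union f V CY) (cl_union f V CW)"
    by (rule main_lemma[where \<alpha> = \<alpha> and \<beta> = \<beta>]) (use finV fV DcC BcC symBc notsep assms ab in auto)
qed

end
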